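(* Let $n\ge 2$ and let $A$ be an associative (not necessarily unital) algebra over a field satisfying the identity $x_1x_2\cdots x_n=x_2x_3\cdots x_nx_1$ (i.e. the identity associated with the cycle $(1\,2\,\cdots\,n)\in S_n$). Then $A$ is eventually commutative of degree $n+1$.
   Context: An algebra $A$ satisfies an identity $x_1\cdots x_m=x_{\tau(1)}\cdots x_{\tau(m)}$ (with $\tau\in S_m$) if $a_1\cdots a_m=a_{\tau(1)}\cdots a_{\tau(m)}$ for all $a_1,\dots,a_m\in A$. $A$ is eventually commutative of degree $k$ if it satisfies $x_1\cdots x_k=x_{\tau(1)}\cdots x_{\tau(k)}$ for every $\tau\in S_k$. *)

theory Defs
  imports Complex_Main "HOL-Combinatorics.Permutations"
begin

fun lprod :: "'a::semigroup_mult list \<Rightarrow> 'a" where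
  "lprod [] = undefined"
| "lprod [x] = x"
| "lprod (x # y # xs) = x * lprod (y # xs)"

text \<open>Associative (not necessarily unital) algebra over a field: a ring (class ring has
  no unit) which is a module over the field via s, with bilinear multiplication.\<close>
definition algebra_over :: "('k::field \<Rightarrow> 'a::ring \<Rightarrow> 'a) \<Rightarrow> bool" where
  "algebra_over s \<longleftrightarrow> module s \<and>
     (\<forall>c x y. s c (x * y) = s c x * y \<and> s c (x * y) = x * s c y)"

text \<open>A satisfies x_1...x_m = x_tau(1)...x_tau(m); indices shifted to 0..m-1.\<close>
definition satisfies_identity :: "'a::semigroup_mult itself \<Rightarrow> nat \<Rightarrow> (nat \<Rightarrow> nat) \<Rightarrow> bool" where
  "satisfies_identity _ m \<tau> \<longleftrightarrow>
     (\<forall>a :: nat \<Rightarrow> 'a. lprod (map a [0..<m]) = lprod (map (a \<circ> \<tau>) [0..<m]))"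

definition eventually_commutative :: "'a::semigroup_mult itself \<Rightarrow> nat \<Rightarrow> bool" where
  "eventually_commutative T k \<longleftrightarrow>
     (\<forall>\<tau>. \<tau> permutes {..<k} \<longrightarrow> satisfies_identity T k \<tau>)"

end

theory Submission
  imports Defs
begin

lemma lprod_Cons: "xs \<noteq> [] \<Longrightarrow> lprod (x # xs) = x * lprod xs"
  by (cases xs) auto

lemma lprod_append: "xs \<noteq> [] \<Longrightarrow> ys \<noteq> [] \<Longrightarrow> lprod (xs @ ys) = lprod xs * lprod ys"
proof (induction xs)
  case Nil then show ?case by simp
next
  case (Cons x xs)
  show ?case
  proof (cases "xs = []")
    case True then show ?thesis using Cons by (simp add: lprod_Cons)
  next
    case False then show ?thesis using Cons by (simp add: lprod_Cons mult.assoc)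
  qed
qed

lemma lprod_merge: "lprod (u @ [a*b] @ v) = lprod (u @ [a,b] @ v)"
proof (induction u)
  case Nil then show ?case by (cases v) (auto simp: mult.assoc)
next
  case (Cons z u) then show ?case by (simp add: lprod_Cons)
qed

lemma rot_nth: "i < length L \<Longrightarrow> rotate 1 L ! i = L ! ((i + 1) mod length L)"
  using nth_rotate[of i L 1] by (simp add: add.commute)

lemma rot_map: "map (nth L \<circ> (\<lambda>i. (i + 1) mod length L)) [0..<length L] = rotate1 L"
proof (rule nth_equalityI)
  fix i assume "i < length (map (nth L \<circ> (\<lambda>i. (i + 1) mod length L)) [0..<length L])"
  then have i: "i < length L" by simp
  show "map (nth L \<circ> (\<lambda>i. (i + 1) mod length L)) [0..<length L] ! i = rotate1 L ! i"
    using rot_nth[OF i] i by simp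
qed simp

locale cyc =
  fixes n :: nat and T :: "'a::semigroup_mult itself"
  assumes n2: "n \<ge> 2"
  and H: "\<And>L::'a list. length L = n \<Longrightarrow> lprod L = lprod (rotate1 L)"
begin

lemma R: "length (L::'a list) = n + 1 \<Longrightarrow> lprod L = lprod (rotate1 L)"
proof -
  assume len: "length L = n + 1"
  obtain x w where L: "L = x # w" using len by (cases L) auto
  have lw: "length w = n" using len L by simp
  then have "length w \<ge> 2" using n2 by simp
  then obtain u a b where w: "w = u @ [a,b]"
  proof -
    obtain w1 b where 1: "w = w1 @ [b]" using lw n2 by (metis list.size(3) not_numeral_le_zero rev_exhaust)
    then have "w1 \<noteq> []" using lw n2 by auto
    then obtain u a where "w1 = u @ [a]" by (metis rev_exhaust)
    with 1 show ?thesis using that by simp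
  qed
  have "lprod L = lprod (x # u @ [a*b] @ [])" using lprod_merge[of "x#u" a b "[]"] L w by simp
  also have "\<dots> = lprod (rotate1 (x # u @ [a*b]))" using H[of "x # u @ [a*b]"] lw w by simp
  also have "\<dots> = lprod (u @ [a*b] @ [x])" by simp
  also have "\<dots> = lprod (u @ [a,b] @ [x])" by (rule lprod_merge)
  also have "\<dots> = lprod (rotate1 L)" using L w by simp
  finally show ?thesis .
qed

lemma Rk: "length (L::'a list) = n + 1 \<Longrightarrow> lprod L = lprod (rotate k L)"
  by (induction k) (auto simp: rotate_Suc intro: R[THEN trans])

lemma S: "length (m::'a list) = n - 1 \<Longrightarrow> lprod (x # m @ [y]) = lprod (y # m @ [x])"
proof -
  assume lm: "length m = n - 1"
  have "lprod (x # m @ [y]) = lprod ((m @ [y]) @ [x])" using R[of "x # m @ [y]"] lm n2 by simp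
  also have "\<dots> = lprod (m @ [y]) * x" using lprod_append[of "m @ [y]" "[x]"] by simp
  also have "lprod (m @ [y]) = lprod (y # m)" using H[of "y # m"] lm n2 by simp
  also have "lprod (y # m) * x = lprod ((y # m) @ [x])" using lprod_append[of "y # m" "[x]"] by simp
  finally show ?thesis by simp
qed

lemma swap: "length (a @ [x,y] @ b :: 'a list) = n + 1 \<Longrightarrow>
   lprod (a @ [x,y] @ b) = lprod (a @ [y,x] @ b)"
proof -
  assume len: "length (a @ [x,y] @ b) = n + 1"
  have r1: "rotate (length (a @ [x])) ((a @ [x]) @ (y # b)) = (y # b) @ (a @ [x])"
    by (rule rotate_append)
  have r2: "rotate (length (a @ [y])) ((a @ [y]) @ (x # b)) = (x # b) @ (a @ [y])"
    by (rule rotate_append)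
  have "lprod (a @ [x,y] @ b) = lprod (y # (b @ a) @ [x])"
    using Rk[of "a @ [x,y] @ b" "length a + 1"] len r1 by simp
  also have "\<dots> = lprod (x # (b @ a) @ [y])" using len by (intro S) simp
  also have "\<dots> = lprod (a @ [y,x] @ b)"
    using Rk[of "a @ [y,x] @ b" "length a + 1"] len r2 by simp
  finally show ?thesis .
qed

lemma move: "length (p @ u @ y # v :: 'a list) = n + 1 \<Longrightarrow>
   lprod (p @ u @ y # v) = lprod (p @ y # u @ v)"
proof (induction u arbitrary: v rule: rev_induct)
  case Nil then show ?case by simp
next
  case (snoc z u)
  have "lprod (p @ (u @ [z]) @ y # v) = lprod ((p @ u) @ [z,y] @ v)" by simp
  also have "\<dots> = lprod ((p @ u) @ [y,z] @ v)" using snoc.prems by (intro swap) simp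
  also have "\<dots> = lprod (p @ u @ y # (z # v))" by simp
  also have "\<dots> = lprod (p @ y # u @ z # v)" using snoc.prems by (intro snoc.IH) simp
  finally show ?case by simp
qed

lemma perm: "mset xs = mset ys \<Longrightarrow> length (p @ xs :: 'a list) = n + 1 \<Longrightarrow>
   lprod (p @ xs) = lprod (p @ ys)"
proof (induction ys arbitrary: xs p)
  case Nil then show ?case by simp
next
  case (Cons y ys)
  have "y \<in> set xs" using Cons.prems(1) by (metis list.set_intros(1) set_mset_mset)
  then obtain u v where xs: "xs = u @ y # v" by (meson split_list)
  have "lprod (p @ xs) = lprod (p @ y # u @ v)" using Cons.prems(2) xs by (simp add: move)
  also have "\<dots> = lprod ((p @ [y]) @ (u @ v))" by simp
  also have "\<dots> = lprod ((p @ [y]) @ ys)"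
    using Cons.prems xs by (intro Cons.IH) (auto simp: add.commute)
  finally show ?case by simp
qed

end

theorem theorem3p6:
  fixes s :: "'k::field \<Rightarrow> 'a::ring \<Rightarrow> 'a" and n :: nat
  assumes "algebra_over s"
    and "n \<ge> 2"
    and "satisfies_identity TYPE('a) n (\<lambda>i. (i + 1) mod n)"
  shows "eventually_commutative TYPE('a) (n + 1)"
proof -
  have H: "lprod L = lprod (rotate1 L)" if "length (L::'a list) = n" for L
  proof -
    have "lprod (map (nth L) [0..<n]) = lprod (map (nth L \<circ> (\<lambda>i. (i + 1) mod n)) [0..<n])"
      using assms(3) unfolding satisfies_identity_def by blast
    moreover have "map (nth L) [0..<n] = L" using that by (metis map_nth)
    moreover have "map (nth L \<circ> (\<lambda>i. (i + 1) mod n)) [0..<n] = rotate1 L"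
      unfolding that[symmetric] by (rule rot_map)
    ultimately show ?thesis by simp
  qed
  interpret cyc n "TYPE('a)" by unfold_locales (fact assms(2), erule H)
  show ?thesis unfolding eventually_commutative_def satisfies_identity_def
  proof (intro allI impI)
    fix \<tau> :: "nat \<Rightarrow> nat" and a :: "nat \<Rightarrow> 'a"
    assume p: "\<tau> permutes {..<n+1}"
    have "mset (map \<tau> [0..<n+1]) = mset [0..<n+1]"
    proof -
      have "distinct (map \<tau> [0..<n+1])"
        using permutes_inj_on[OF p] distinct_upt distinct_map by blast
      moreover have "set (map \<tau> [0..<n+1]) = set [0..<n+1]"
        using permutes_image[OF p] by (simp only: set_map set_upt lessThan_atLeast0)
      ultimately show ?thesis using set_eq_iff_mset_eq_distinct distinct_upt by blast
    qed
    then have "mset (map a [0..<n+1]) = mset (map (a \<circ> \<tau>) [0..<n+1])"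
      by (metis map_map mset_map)
    then show "lprod (map a [0..<n+1]) = lprod (map (a \<circ> \<tau>) [0..<n+1])"
      using perm[of "map a [0..<n+1]" _ "[]"] by simp
  qed
qed

end
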